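(* Let $p_1>p_2\ge2$ be relatively prime positive integers, and write $p_1=ap_2+b$ with integers $a\ge1$ and $0<b<p_2$. Then the first $p_1+p_2$ terms of the D'Hondt sequence $S_1(p_1,p_2)$ are $$1^{a},\,2,\,1^{k_2},\,2,\,1^{k_3},\,2,\,\dots,\,1^{k_{p_2}},\,2,$$ where for $i=2,\dots,p_2$, $k_i=a+1$ if $i\in S$ and $k_i=a$ otherwise, with $S=\{\lceil jp_2/b\rceil : j=1,\dots,b\}$.
   Context: Stationary divisor method with cut point $c$ for votes $(p_1,p_2)$: seats are allocated one at a time. Initially $a_1=a_2=0$; each next seat goes to a party $i$ maximizing $p_i/(a_i+c)$, whose $a_i$ then increases by $1$. Ties are broken in favor of party $1$. D'Hondt's method is $c=1$. $S_1(p_1,p_2)$ is the infinite sequence of party labels (in $\{1,2\}$) of successive seats. The notation $1^k$ denotes $k$ consecutive $1$'s. *)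

theory Defs
  imports Complex_Main
begin

text \<open>Stationary divisor method with cut point c for votes (p1,p2).
  seats p1 p2 c n = (a1,a2), the seat counts after n seats have been allocated.
  The next seat goes to party 1 iff p1/(a1+c) >= p2/(a2+c) (ties favour party 1).\<close>

definition next_party :: "real \<Rightarrow> real \<Rightarrow> real \<Rightarrow> nat \<times> nat \<Rightarrow> nat" where
  "next_party p1 p2 c s =
     (if p1 / (real (fst s) + c) \<ge> p2 / (real (snd s) + c) then 1 else 2)"

fun seats :: "real \<Rightarrow> real \<Rightarrow> real \<Rightarrow> nat \<Rightarrow> nat \<times> nat" where
  "seats p1 p2 c 0 = (0, 0)"
| "seats p1 p2 c (Suc n) =
     (let s = seats p1 p2 c n in
      if next_party p1 p2 c s = 1 then (Suc (fst s), snd s) else (fst s, Suc (snd s)))"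

text \<open>The sequence S_c(p1,p2) of party labels, 0-indexed: entry n is the label of the (n+1)-st seat.\<close>
definition stationary_seq :: "real \<Rightarrow> real \<Rightarrow> real \<Rightarrow> nat \<Rightarrow> nat" where
  "stationary_seq c p1 p2 n = next_party p1 p2 c (seats p1 p2 c n)"

definition dhondt_seq :: "real \<Rightarrow> real \<Rightarrow> nat \<Rightarrow> nat" where
  "dhondt_seq p1 p2 = stationary_seq 1 p1 p2"

end

theory Submission
  imports Defs
begin

lemma np:
  assumes "p2 > (0::nat)"
  shows "next_party (real p1) (real p2) 1 (x,m) = (if x < p1*(m+1) div p2 then 1 else 2)"
proof -
  have "(real p2 / (real m + 1) \<le> real p1 / (real x + 1)) \<longleftrightarrow> real p2 * (real x + 1) \<le> real p1 * (real m + 1)"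
    by (simp add: divide_simps mult.commute)
  also have "\<dots> \<longleftrightarrow> p2 * (x+1) \<le> p1 * (m+1)"
    by (metis (mono_tags) of_nat_1 of_nat_add of_nat_le_iff of_nat_mult)
  also have "\<dots> \<longleftrightarrow> x < p1*(m+1) div p2"
    using div_less_iff_less_mult[OF assms, of "p1*(m+1)" "x+1"] by (auto simp: mult.commute)
  finally show ?thesis unfolding next_party_def by simp
qed

lemma run:
  assumes p2: "p2 > (0::nat)" and s: "seats (real p1) (real p2) 1 n = (x,m)"
  shows "t \<le> p1*(m+1) div p2 - x \<Longrightarrow> seats (real p1) (real p2) 1 (n+t) = (x+t,m)"
proof (induction t)
  case 0 then show ?case using s by simp
next
  case (Suc t)
  then have h: "seats (real p1) (real p2) 1 (n+t) = (x+t,m)" by simp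
  have "x + t < p1*(m+1) div p2" using Suc.prems by linarith
  then show ?case using h np[OF p2] by simp
qed

lemma block:
  assumes p2: "p2 > (0::nat)" and s: "seats (real p1) (real p2) 1 n = (x,m)"
    and xle: "x \<le> p1*(m+1) div p2"
  defines "d \<equiv> p1*(m+1) div p2 - x"
  shows "map (dhondt_seq (real p1) (real p2)) [n..<n+d+1] = replicate d 1 @ [2]"
    and "seats (real p1) (real p2) 1 (n+d+1) = (p1*(m+1) div p2, m+1)"
proof -
  have st: "\<And>t. t \<le> d \<Longrightarrow> seats (real p1) (real p2) 1 (n+t) = (x+t,m)"
    using run[OF p2 s] d_def by blast
  have last: "dhondt_seq (real p1) (real p2) (n+d) = 2"
    using st[of d] np[OF p2] xle unfolding dhondt_seq_def stationary_seq_def d_def by simp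
  have pre: "map (dhondt_seq (real p1) (real p2)) [n..<n+d] = replicate d 1"
  proof (rule nth_equalityI)
    fix i assume "i < length (map (dhondt_seq (real p1) (real p2)) [n..<n+d])"
    then have i: "i < d" by simp
    then have "x + i < p1*(m+1) div p2" using d_def by linarith
    then show "map (dhondt_seq (real p1) (real p2)) [n..<n+d] ! i = replicate d 1 ! i"
      using st[of i] i np[OF p2] unfolding dhondt_seq_def stationary_seq_def by simp
  qed simp
  show "map (dhondt_seq (real p1) (real p2)) [n..<n+d+1] = replicate d 1 @ [2]"
    using pre last by simp
  show "seats (real p1) (real p2) 1 (n+d+1) = (p1*(m+1) div p2, m+1)"
    using st[of d] np[OF p2] xle
    unfolding d_def by (simp add: Let_def)
qed

lemma allblocks:
  fixes p1 p2 :: nat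
  assumes p2: "p2 > (0::nat)"
  defines "F \<equiv> (\<lambda>m. p1*m div p2)"
  shows "seats (real p1) (real p2) 1 (F m + m) = (F m, m) \<and>
    map (dhondt_seq (real p1) (real p2)) [0..<F m + m] =
      concat (map (\<lambda>i. replicate (F i - F (i-1)) 1 @ [2]) [1..<m+1])"
proof (induction m)
  case 0 then show ?case by (simp add: F_def)
next
  case (Suc m)
  have mono: "F m \<le> F (m+1)" unfolding F_def by (simp add: div_le_mono)
  have s: "seats (real p1) (real p2) 1 (F m + m) = (F m, m)" using Suc by simp
  have mono': "F m \<le> p1*(m+1) div p2" using mono unfolding F_def by simp
  have eq: "F m + m + (p1*(m+1) div p2 - F m) + 1 = F (Suc m) + Suc m" using mono' unfolding F_def by simp
  note b = block[OF p2 s mono']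
  have b1: "map (dhondt_seq (real p1) (real p2)) [F m + m..<F (Suc m) + Suc m] = replicate (F (Suc m) - F m) 1 @ [2]"
    using b(1)[unfolded eq] unfolding F_def by simp
  have b2: "seats (real p1) (real p2) 1 (F (Suc m) + Suc m) = (F (Suc m), Suc m)"
    using b(2)[unfolded eq] unfolding F_def by simp
  have eq2: "F m + m + (p1*(m+1) div p2 - F m + 1) = F (Suc m) + Suc m" using eq by linarith
  have split: "[0..<F (Suc m) + Suc m] = [0..<F m + m] @ [F m + m..<F (Suc m) + Suc m]"
    using upt_add_eq_append[of 0 "F m + m" "p1*(m+1) div p2 - F m + 1", unfolded eq2] by simp
  show ?case using Suc b1 b2 split by simp
qed


lemma ceil_char:
  fixes b p2 i j :: nat
  assumes "b > 0" "i \<ge> 1"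
  shows "nat \<lceil>real j * real p2 / real b\<rceil> = i \<longleftrightarrow> b*(i-1) < j*p2 \<and> j*p2 \<le> b*i"
proof -
  have "nat \<lceil>real j * real p2 / real b\<rceil> = i \<longleftrightarrow> \<lceil>real j * real p2 / real b\<rceil> = int i"
    using assms by auto
  also have "\<dots> \<longleftrightarrow> real i - 1 < real j * real p2 / real b \<and> real j * real p2 / real b \<le> real i"
    by (simp add: ceiling_eq_iff)
  also have "\<dots> \<longleftrightarrow> real b * (real i - 1) < real j * real p2 \<and> real j * real p2 \<le> real b * real i"
    using assms by (simp add: pos_less_divide_eq pos_divide_le_eq mult.commute)
  also have "\<dots> \<longleftrightarrow> real (b*(i-1)) < real (j*p2) \<and> real (j*p2) \<le> real (b*i)"
    using assms by (simp add: of_nat_diff)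
  also have "\<dots> \<longleftrightarrow> b*(i-1) < j*p2 \<and> j*p2 \<le> b*i"
    by (simp only: of_nat_less_iff of_nat_le_iff)
  finally show ?thesis .
qed

lemma inS:
  fixes b p2 i :: nat
  assumes "b > 0" "p2 > 0" "b < p2" "2 \<le> i" "i \<le> p2"
  shows "(i \<in> {nat \<lceil>real j * real p2 / real b\<rceil> | j. 1 \<le> j \<and> j \<le> b}) \<longleftrightarrow>
         b*(i-1) div p2 < b*i div p2"
proof
  assume "i \<in> {nat \<lceil>real j * real p2 / real b\<rceil> | j. 1 \<le> j \<and> j \<le> b}"
  then obtain j where j: "nat \<lceil>real j * real p2 / real b\<rceil> = i" by auto
  then have h: "b*(i-1) < j*p2" "j*p2 \<le> b*i" using ceil_char[of b i j p2] assms by auto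
  have "b*(i-1) div p2 < j" using h(1) div_less_iff_less_mult[OF assms(2)] by blast
  moreover have "j \<le> b*i div p2" using h(2) div_less_iff_less_mult[OF assms(2), of "b*i" j] by linarith
  ultimately show "b*(i-1) div p2 < b*i div p2" by linarith
next
  assume q: "b*(i-1) div p2 < b*i div p2"
  define j where "j = b*i div p2"
  have "j*p2 \<le> b*i" unfolding j_def using div_mult_mod_eq[of "b*i" p2] by linarith
  moreover have "b*(i-1) < j*p2" using q div_less_iff_less_mult[OF assms(2), of "b*(i-1)" j] unfolding j_def by linarith
  moreover have "j \<le> b" proof -
    have "b*i \<le> b*p2" using assms by simp
    then have "b*i div p2 \<le> b*p2 div p2" by (rule div_le_mono)
    then show ?thesis unfolding j_def using assms by simp
  qed
  moreover have "1 \<le> j" using q unfolding j_def by linarith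
  ultimately show "i \<in> {nat \<lceil>real j * real p2 / real b\<rceil> | j. 1 \<le> j \<and> j \<le> b}"
    using ceil_char[of b i j p2] assms by auto
qed

lemma diffF:
  fixes a b p1 p2 i :: nat
  assumes "p2 > 0" "b < p2" "p1 = a*p2 + b" "i \<ge> 1"
  shows "p1*i div p2 - p1*(i-1) div p2 = (if b*(i-1) div p2 < b*i div p2 then a+1 else a)"
proof -
  have F: "p1*n div p2 = a*n + b*n div p2" for n
  proof -
    have "p1*n = b*n + (a*n)*p2" using assms by (simp add: algebra_simps)
    then show ?thesis using assms(1) by simp
  qed
  have "b*i \<le> b*(i-1) + p2" using assms by (cases i) auto
  then have "b*i div p2 \<le> (b*(i-1) + 1*p2) div p2" by (simp add: div_le_mono)
  then have up: "b*i div p2 \<le> b*(i-1) div p2 + 1" using assms(1) by simp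
  have lo: "b*(i-1) div p2 \<le> b*i div p2" by (simp add: div_le_mono)
  have ai: "a*i = a*(i-1) + a" using assms by (cases i) auto
  show ?thesis unfolding F ai using up lo by auto
qed

theorem mainTheorem13:
  fixes p1 p2 a b :: nat
  assumes "p1 > p2" and "p2 \<ge> 2" and "coprime p1 p2"
    and "p1 = a * p2 + b" and "a \<ge> 1" and "0 < b" and "b < p2"
  defines "S \<equiv> {nat \<lceil>real j * real p2 / real b\<rceil> | j. 1 \<le> j \<and> j \<le> b}"
  defines "k \<equiv> (\<lambda>i::nat. if i \<in> S then a + 1 else a)"
  shows "map (dhondt_seq (real p1) (real p2)) [0..<p1 + p2] =
           replicate a 1 @ [2] @ concat (map (\<lambda>i. replicate (k i) 1 @ [2]) [2..<p2 + 1])"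
proof -
  have p2: "p2 > 0" using assms by simp
  have Fp2: "p1*p2 div p2 = p1" using p2 by simp
  have A: "map (dhondt_seq (real p1) (real p2)) [0..<p1 + p2] =
      concat (map (\<lambda>i. replicate (p1*i div p2 - p1*(i-1) div p2) 1 @ [2]) [1..<p2+1])"
    using allblocks[OF p2, of p1 p2] unfolding Fp2 by simp
  have "[1..<p2+1] = 1 # [Suc 1..<p2+1]" by (rule upt_conv_Cons) (use p2 in simp)
  then have up: "[1..<p2+1] = 1 # [2..<p2+1]" unfolding Suc_1 .
  have F1: "p1*1 div p2 - p1*(1-1) div p2 = a"
  proof -
    have "p1 = b + a*p2" using assms by simp
    then have "p1 div p2 = b div p2 + a" using p2 by simp
    then show ?thesis using assms by simp
  qed
  have C: "map (\<lambda>i. replicate (p1*i div p2 - p1*(i-1) div p2) 1 @ [2]) [2..<p2+1]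
         = map (\<lambda>i. replicate (k i) 1 @ [2]) [2..<p2+1]"
  proof (rule map_cong[OF refl])
    fix i assume "i \<in> set [2..<p2+1]"
    then have i: "2 \<le> i" "i \<le> p2" by auto
    show "replicate (p1*i div p2 - p1*(i-1) div p2) 1 @ [2] = replicate (k i) 1 @ [2]"
      using diffF[OF p2 assms(7) assms(4), of i] inS[OF assms(6) p2 assms(7) i] i
      unfolding k_def S_def by simp
  qed
  show ?thesis unfolding A up list.map(2) concat.simps(2) F1 C by simp
qed

end
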